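(* Let $f\in C^1(\mathbb{R}^n,\mathbb{R}^n)$, $g\in C(\mathbb{R}\times\mathbb{R}^n\times[0,1],\mathbb{R}^n)$, and let $x_0$ be a nondegenerate $T$-periodic limit cycle of $\dot x=f(x)$, $T>0$. Let $x_\varepsilon$ ($\varepsilon\in(0,\varepsilon_0]$) be $T$-periodic solutions of $\dot x=f(x)+\varepsilon g(t,x,\varepsilon)$ with $\|x_\varepsilon(t+\Delta_\varepsilon)-x_0(t)\|\le M\varepsilon$ for all $t\in[0,T]$, $\varepsilon\in(0,\varepsilon_0]$, for some $M,\varepsilon_0>0$ and reals $\Delta_\varepsilon\to0$. Let $z$ be any eigenfunction of $\dot z=-(f'(x_0(t)))^*z$ which is not $T$-periodic, with multiplier $\rho$, and let $M^\perp_z(t)=\frac{\rho}{\rho-1}\int_{t-T}^t\langle z(s),g(s,x_0(s),0)\rangle ds$. Then for every $t\in[0,T]$: if $M^\perp_z(t)>0$ then $\cos\angle\big(z(t),x_\varepsilon(t+\Delta_\varepsilon)-x_0(t)\big)>0$ for all sufficiently small $\varepsilon>0$; and if $M^\perp_z(t)<0$ then $\cos\angle\big(z(t),x_\varepsilon(t+\Delta_\varepsilon)-x_0(t)\big)<0$ for all sufficiently small $\varepsilon>0$.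
   Context: Nondegenerate: the characteristic multiplier $+1$ of $\dot y=f'(x_0(t))y$ (eigenvalue $1$ of $Y(T)$, $Y(0)=I$) has algebraic multiplicity $1$. An eigenfunction of a linear $T$-periodic system is a nonzero solution $z$ with $z(t+T)=\rho z(t)$ for all $t$ and some $\rho\in\mathbb{R}$ (its characteristic multiplier). $\cos\angle(a,b)=\langle a,b\rangle/(\|a\|\,\|b\|)$ for $a,b\in\mathbb{R}^n$. *)

theory Defs
  imports "HOL-Analysis.Analysis" "HOL-Computational_Algebra.Polynomial"
begin

definition charpoly :: "real^'n^'n \<Rightarrow> real poly" where
  "charpoly A = det (\<chi> i j. (if i = j then [:0, 1:] else 0) - [:A $ i $ j:])"

definition alg_mult :: "real \<Rightarrow> real^'n^'n \<Rightarrow> nat" where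
  "alg_mult c A = order c (charpoly A)"

definition cos_angle :: "'a::real_inner \<Rightarrow> 'a \<Rightarrow> real" where
  "cos_angle a b = inner a b / (norm a * norm b)"

end

theory Submission
  imports Defs
begin

lemma lin_err:
  fixes f :: "real^'n \<Rightarrow> real^'n" and f' :: "real^'n \<Rightarrow> real^'n^'n"
  assumes fd: "\<And>x. (f has_derivative (\<lambda>h. f' x *v h)) (at x)"
    and bnd: "\<And>y. y \<in> cball x r \<Longrightarrow> norm (f' y - f' x) \<le> \<eta>"
    and v: "norm v \<le> r"
  shows "norm (f (x + v) - f x - f' x *v v) \<le> norm v * (real CARD('n) * real CARD('n) * \<eta>)"
proof -
  have "norm (f (x + v) - f x - f' x *v ((x + v) - x)) \<le> norm ((x + v) - x) * (real CARD('n) * real CARD('n) * \<eta>)"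
  proof (rule differentiable_bound_linearization[where S="cball x r" and f'="\<lambda>y h. f' y *v h"])
    fix t :: real assume "t \<in> {0..1}"
    then have "norm (t *\<^sub>R v) \<le> norm v"
      by (simp add: mult_left_le_one_le)
    then show "x + t *\<^sub>R (x + v - x) \<in> cball x r" using v
      by (simp add: dist_norm)
  next
    fix y assume "y \<in> cball x r"
    show "(f has_derivative (\<lambda>h. f' y *v h)) (at y within cball x r)"
      by (rule has_derivative_at_withinI[OF fd])
  next
    fix y assume y: "y \<in> cball x r"
    have e: "(\<lambda>h. f' y *v h) - (\<lambda>h. f' x *v h) = (*v) (f' y - f' x)"
      by (simp add: fun_eq_iff matrix_vector_mult_diff_rdistrib)
    show "onorm ((\<lambda>h. f' y *v h) - (\<lambda>h. f' x *v h)) \<le> real CARD('n) * real CARD('n) * \<eta>"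
      unfolding e
    proof (rule onorm_le_matrix_component)
      fix i j
      have "\<bar>(f' y - f' x) $ i $ j\<bar> \<le> norm ((f' y - f' x) $ i)" by (rule component_le_norm_cart)
      also have "\<dots> \<le> norm (f' y - f' x)" by (rule Finite_Cartesian_Product.norm_nth_le)
      also have "\<dots> \<le> \<eta>" using bnd y by blast
      finally show "\<bar>(f' y - f' x) $ i $ j\<bar> \<le> \<eta>" .
    qed
  next
    have "0 \<le> r" by (rule order_trans[OF norm_ge_zero v])
    then show "x \<in> cball x r" by simp
  qed
  then show ?thesis by simp
qed

theorem corollary2:
  fixes f :: "real^'n \<Rightarrow> real^'n"
    and f' :: "real^'n \<Rightarrow> real^'n^'n"
    and g :: "real \<Rightarrow> real^'n \<Rightarrow> real \<Rightarrow> real^'n"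
    and x0 :: "real \<Rightarrow> real^'n"
    and Y :: "real \<Rightarrow> real^'n^'n"
    and xe :: "real \<Rightarrow> real \<Rightarrow> real^'n"
    and \<Delta> :: "real \<Rightarrow> real"
    and z :: "real \<Rightarrow> real^'n"
    and T M \<epsilon>0 \<rho> :: real
  assumes f_C1: "\<And>x. (f has_derivative (\<lambda>h. f' x *v h)) (at x)" "continuous_on UNIV f'"
    and g_cont: "continuous_on (UNIV \<times> UNIV \<times> {0..1}) (\<lambda>(t, x, e). g t x e)"
    and T_pos: "T > 0"
    and x0_sol: "\<And>t. (x0 has_vector_derivative f (x0 t)) (at t)"
    and x0_per: "\<And>t. x0 (t + T) = x0 t"
    and x0_nonconst: "\<exists>s t. x0 s \<noteq> x0 t"
    and Y_fund: "\<And>t. (Y has_vector_derivative (f' (x0 t) ** Y t)) (at t)" "Y 0 = mat 1"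
    and nondeg: "alg_mult 1 (Y T) = 1"
    and M_pos: "M > 0" and eps0_pos: "\<epsilon>0 > 0"
    and xe_sol: "\<And>\<epsilon> t. \<epsilon> \<in> {0<..\<epsilon>0} \<Longrightarrow>
        ((xe \<epsilon>) has_vector_derivative (f (xe \<epsilon> t) + \<epsilon> *\<^sub>R g t (xe \<epsilon> t) \<epsilon>)) (at t)"
    and xe_per: "\<And>\<epsilon> t. \<epsilon> \<in> {0<..\<epsilon>0} \<Longrightarrow> xe \<epsilon> (t + T) = xe \<epsilon> t"
    and xe_close: "\<And>\<epsilon> t. \<epsilon> \<in> {0<..\<epsilon>0} \<Longrightarrow> t \<in> {0..T} \<Longrightarrow>
        norm (xe \<epsilon> (t + \<Delta> \<epsilon>) - x0 t) \<le> M * \<epsilon>"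
    and \<Delta>_lim: "(\<Delta> \<longlongrightarrow> 0) (at_right 0)"
    and z_sol: "\<And>t. (z has_vector_derivative (- (transpose (f' (x0 t)) *v z t))) (at t)"
    and z_nonzero: "\<exists>t. z t \<noteq> 0"
    and z_eig: "\<And>t. z (t + T) = \<rho> *\<^sub>R z t"
    and z_not_per: "\<not> (\<forall>t. z (t + T) = z t)"
  shows "\<forall>t\<in>{0..T}.
      (\<rho> / (\<rho> - 1) * integral {t - T..t} (\<lambda>s. z s \<bullet> g s (x0 s) 0) > 0 \<longrightarrow>
         (\<forall>\<^sub>F \<epsilon> in at_right 0. cos_angle (z t) (xe \<epsilon> (t + \<Delta> \<epsilon>) - x0 t) > 0)) \<and>
      (\<rho> / (\<rho> - 1) * integral {t - T..t} (\<lambda>s. z s \<bullet> g s (x0 s) 0) < 0 \<longrightarrow>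
         (\<forall>\<^sub>F \<epsilon> in at_right 0. cos_angle (z t) (xe \<epsilon> (t + \<Delta> \<epsilon>) - x0 t) < 0))"
proof -
  have rho0: "\<rho> \<noteq> 0"
  proof
    assume "\<rho> = 0"
    then have "z t = 0" for t using z_eig[of "t - T"] by simp
    then show False using z_nonzero by blast
  qed
  have rho1: "\<rho> \<noteq> 1" using z_not_per z_eig by (metis scaleR_one)
  have x0c: "continuous_on A x0" for A
    using x0_sol by (meson continuous_at_imp_continuous_on has_vector_derivative_continuous)
  have zc: "continuous_on A z" for A
    using z_sol by (meson continuous_at_imp_continuous_on has_vector_derivative_continuous)
  define K where "K t = \<rho> / (\<rho> - 1) * integral {t - T..t} (\<lambda>s. z s \<bullet> g s (x0 s) 0)" for t
  have key: "\<forall>\<^sub>F \<epsilon> in at_right 0. \<bar>z t \<bullet> (xe \<epsilon> (t + \<Delta> \<epsilon>) - x0 t) - \<epsilon> * K t\<bar> \<le> e * \<epsilon>"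
    if t: "t \<in> {0..T}" and e: "e > 0" for t e
  proof -
    obtain Bz where Bz: "Bz > 0" "\<And>s. s \<in> {-T..T} \<Longrightarrow> norm (z s) \<le> Bz"
    proof -
      have "compact (z ` {-T..T})" by (rule compact_continuous_image[OF zc compact_Icc])
      then have "bounded (z ` {-T..T})" by (rule compact_imp_bounded)
      then obtain b where "b > 0" "\<forall>x\<in>z ` {-T..T}. norm x \<le> b"
        unfolding bounded_pos by blast
      then show ?thesis using that by auto
    qed
    define S where "S = {a + b | a b. a \<in> x0 ` {-T..T} \<and> b \<in> cball (0::real^'n) 1}"
    have Scomp: "compact S" unfolding S_def
      by (rule compact_sums[OF compact_continuous_image[OF x0c compact_Icc] compact_cball])
    have inS: "x0 s + v \<in> S" if "s \<in> {-T..T}" "norm v \<le> 1" for s v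
    proof -
      have "x0 s \<in> x0 ` {-T..T}" using that by auto
      moreover have "v \<in> cball 0 1" using that by simp
      ultimately show ?thesis unfolding S_def by blast
    qed
    define q where "q = \<bar>\<rho> / (\<rho> - 1)\<bar>"
    have q: "q > 0" using rho0 rho1 by (simp add: q_def)
    define C where "C = real CARD('n) * real CARD('n)"
    have C: "C > 0" by (simp add: C_def)
    define \<eta> where "\<eta> = e / (2 * q * Bz * T)"
    have \<eta>: "\<eta> > 0" using e q Bz T_pos by (simp add: \<eta>_def)
    have "uniformly_continuous_on S f'"
      by (rule compact_uniformly_continuous[OF continuous_on_subset[OF f_C1(2)] Scomp]) simp
    moreover have "\<eta> / (M * C) > 0" using \<eta> M_pos C by simp
    ultimately obtain df where df: "df > 0"
      "\<And>y y'. y \<in> S \<Longrightarrow> y' \<in> S \<Longrightarrow> dist y' y < df \<Longrightarrow> dist (f' y') (f' y) < \<eta> / (M * C)"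
      unfolding uniformly_continuous_on_def by metis
    define Cg where "Cg = {-T-1..T+1} \<times> S \<times> {0..(1::real)}"
    have "compact Cg" unfolding Cg_def by (intro compact_Times compact_Icc Scomp)
    moreover have "continuous_on Cg (\<lambda>(t, x, e). g t x e)"
      by (rule continuous_on_subset[OF g_cont]) (auto simp: Cg_def)
    ultimately have "uniformly_continuous_on Cg (\<lambda>(t, x, e). g t x e)"
      using compact_uniformly_continuous by blast
    then obtain dg where dg: "dg > 0"
      "\<And>p p'. p \<in> Cg \<Longrightarrow> p' \<in> Cg \<Longrightarrow> dist p' p < dg \<Longrightarrow>
         dist ((\<lambda>(t, x, e). g t x e) p') ((\<lambda>(t, x, e). g t x e) p) < \<eta>"
      unfolding uniformly_continuous_on_def using \<eta> by metis
    define c where "c = min \<epsilon>0 (min 1 (min (1/M) (min (df/M) (dg/(2*(M+1))))))"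
    have c: "c > 0" using eps0_pos M_pos df dg by (simp add: c_def)
    have ev1: "\<forall>\<^sub>F \<epsilon> in at_right 0. \<epsilon> \<in> {0<..<c}" by (rule eventually_at_right_real[OF c])
    have "min 1 (dg/2) > 0" using dg by simp
    then have ev2: "\<forall>\<^sub>F \<epsilon> in at_right 0. dist (\<Delta> \<epsilon>) 0 < min 1 (dg/2)"
      using \<Delta>_lim unfolding tendsto_iff by blast
    show ?thesis using eventually_conj[OF ev1 ev2]
    proof (rule eventually_mono)
      fix \<epsilon> assume h: "\<epsilon> \<in> {0<..<c} \<and> dist (\<Delta> \<epsilon>) 0 < min 1 (dg/2)"
      then have eps: "0 < \<epsilon>" "\<epsilon> < c" and D: "\<bar>\<Delta> \<epsilon>\<bar> < 1" "\<bar>\<Delta> \<epsilon>\<bar> < dg/2"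
        by (auto simp: dist_real_def)
      have epsI: "\<epsilon> \<in> {0<..\<epsilon>0}" using eps by (auto simp: c_def)
      have "\<epsilon> < 1/M" "\<epsilon> < df/M" "\<epsilon> < dg/(2*(M+1))" "\<epsilon> < 1" using eps by (auto simp: c_def)
      then have e1: "\<epsilon> \<le> 1" "M*\<epsilon> \<le> 1" "M * \<epsilon> < df" "(M+1) * \<epsilon> < dg/2"
        using M_pos by (auto simp: pos_less_divide_eq mult.commute algebra_simps)
      define d where "d s = xe \<epsilon> (s + \<Delta> \<epsilon>) - x0 s" for s
      have dper: "d (s + T) = d s" for s
      proof -
        have "xe \<epsilon> (s + T + \<Delta> \<epsilon>) = xe \<epsilon> (s + \<Delta> \<epsilon> + T)" by (simp add: algebra_simps)
        then show ?thesis using xe_per[OF epsI, of "s + \<Delta> \<epsilon>"] x0_per[of s] by (simp add: d_def)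
      qed
      have dbnd: "norm (d s) \<le> M * \<epsilon>" if "s \<in> {-T..T}" for s
      proof (cases "s \<ge> 0")
        case True then show ?thesis using xe_close[OF epsI, of s] that by (simp add: d_def)
      next
        case False
        then have "s + T \<in> {0..T}" using that by auto
        then show ?thesis using xe_close[OF epsI, of "s+T"] dper[of s] by (simp add: d_def)
      qed
      define g0 where "g0 s = g s (x0 s) 0" for s
      define w' where "w' s = (- (transpose (f' (x0 s)) *v z s)) \<bullet> d s + z s \<bullet> (f (xe \<epsilon> (s + \<Delta> \<epsilon>)) + \<epsilon> *\<^sub>R g (s + \<Delta> \<epsilon>) (xe \<epsilon> (s + \<Delta> \<epsilon>)) \<epsilon> - f (x0 s))" for s
      have dder: "(d has_vector_derivative (f (xe \<epsilon> (s + \<Delta> \<epsilon>)) + \<epsilon> *\<^sub>R g (s + \<Delta> \<epsilon>) (xe \<epsilon> (s + \<Delta> \<epsilon>)) \<epsilon> - f (x0 s))) (at s)" for s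
      proof -
        have "((\<lambda>s. s + \<Delta> \<epsilon>) has_vector_derivative 1) (at s)"
          using has_vector_derivative_add[OF has_vector_derivative_id has_vector_derivative_const] by simp
        from vector_diff_chain_at[OF this xe_sol[OF epsI, of "s + \<Delta> \<epsilon>"]]
        have "((\<lambda>s. xe \<epsilon> (s + \<Delta> \<epsilon>)) has_vector_derivative (f (xe \<epsilon> (s + \<Delta> \<epsilon>)) + \<epsilon> *\<^sub>R g (s + \<Delta> \<epsilon>) (xe \<epsilon> (s + \<Delta> \<epsilon>)) \<epsilon>)) (at s)"
          by (simp add: o_def)
        from has_vector_derivative_diff[OF this x0_sol[of s]] show ?thesis by (simp add: d_def[abs_def])
      qed
      define w where "w s = z s \<bullet> d s" for s
      have wder: "(w has_vector_derivative w' s) (at s)" for s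
        unfolding has_vector_derivative_def w_def[abs_def]
        apply (rule has_derivative_eq_rhs[OF has_derivative_inner[OF z_sol[of s, unfolded has_vector_derivative_def] dder[of s, unfolded has_vector_derivative_def]]])
        by (simp add: fun_eq_iff w'_def algebra_simps)
      have Tint: "(w' has_integral (w t - w (t - T))) {t - T..t}"
        using T_pos by (intro fundamental_theorem_of_calculus) (auto intro: has_vector_derivative_at_within wder)
      have wrel: "w t = \<rho> * w (t - T)"
        using z_eig[of "t - T"] dper[of "t - T"] by (simp add: w_def)
      have g0c: "continuous_on {t-T..t} (\<lambda>s. z s \<bullet> g0 s)"
      proof -
        have "continuous_on {t-T..t} (\<lambda>s. (s, x0 s, 0::real))"
          by (intro continuous_intros x0c)
        moreover have sub: "(\<lambda>s. (s, x0 s, 0::real)) ` {t-T..t} \<subseteq> UNIV \<times> UNIV \<times> {0..1}" by auto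
        ultimately have "continuous_on {t-T..t} (\<lambda>s. (\<lambda>(t, x, e). g t x e) (s, x0 s, 0::real))"
          by (rule continuous_on_compose2[OF g_cont])
        then have "continuous_on {t-T..t} g0"
          by (simp add: g0_def[abs_def])
        then show ?thesis by (intro continuous_intros zc)
      qed
      define I where "I = integral {t - T..t} (\<lambda>s. z s \<bullet> g s (x0 s) 0)"
      have Iint: "((\<lambda>s. z s \<bullet> g0 s) has_integral I) {t-T..t}"
        unfolding I_def g0_def[symmetric] by (rule integrable_integral[OF integrable_continuous_interval[OF g0c]])
      have rint: "((\<lambda>s. w' s - \<epsilon> * (z s \<bullet> g0 s)) has_integral (w t - w (t-T) - \<epsilon> * I)) {t-T..t}"
        by (intro has_integral_diff Tint has_integral_mult_right Iint)
      have rbnd: "norm (w' s - \<epsilon> * (z s \<bullet> g0 s)) \<le> 2 * Bz * \<eta> * \<epsilon>" if s: "s \<in> {t-T..t}" for s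
      proof -
        have s': "s \<in> {-T..T}" using s t by auto
        have dn: "norm (d s) \<le> M * \<epsilon>" by (rule dbnd[OF s'])
        have xe_eq: "xe \<epsilon> (s + \<Delta> \<epsilon>) = x0 s + d s" by (simp add: d_def)
        define err1 where "err1 = f (x0 s + d s) - f (x0 s) - f' (x0 s) *v d s"
        define err2 where "err2 = g (s + \<Delta> \<epsilon>) (xe \<epsilon> (s + \<Delta> \<epsilon>)) \<epsilon> - g0 s"
        have eq: "w' s - \<epsilon> * (z s \<bullet> g0 s) = z s \<bullet> err1 + \<epsilon> * (z s \<bullet> err2)"
          unfolding w'_def err1_def err2_def xe_eq
          by (simp add: dot_lmul_matrix inner_diff_right inner_add_right algebra_simps)
        have n1: "norm err1 \<le> \<eta> * \<epsilon>"
        proof -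
          have "norm err1 \<le> norm (d s) * (real CARD('n) * real CARD('n) * (\<eta> / (M * C)))"
            unfolding err1_def
          proof (rule lin_err[OF f_C1(1)])
            fix y assume y: "y \<in> cball (x0 s) (M * \<epsilon>)"
            then have ny: "norm (y - x0 s) \<le> M * \<epsilon>" by (simp add: dist_norm norm_minus_commute)
            have "x0 s + (y - x0 s) \<in> S" using inS[OF s', of "y - x0 s"] ny e1 by simp
            then have yS: "y \<in> S" by simp
            have "x0 s + 0 \<in> S" using inS[OF s', of 0] by simp
            then have xS: "x0 s \<in> S" by simp
            have "dist y (x0 s) < df" using ny e1 by (simp add: dist_norm)
            from df(2)[OF xS yS this] show "norm (f' y - f' (x0 s)) \<le> \<eta> / (M * C)"
              by (simp add: dist_norm)
          qed (rule dn)
          also have "\<dots> = norm (d s) * (C * (\<eta> / (M * C)))" by (simp add: C_def)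
          also have "\<dots> \<le> M * \<epsilon> * (C * (\<eta> / (M * C)))"
            using dn \<eta> C M_pos by (intro mult_right_mono) auto
          also have "\<dots> = \<eta> * \<epsilon>" using C M_pos by (simp add: field_simps)
          finally show ?thesis .
        qed
        have n2: "norm err2 \<le> \<eta>"
        proof -
          have pC: "(s, x0 s, 0) \<in> Cg" using s' inS[OF s', of 0] by (auto simp: Cg_def)
          have "x0 s + d s \<in> S" using inS[OF s', of "d s"] dn e1 by simp
          then have p'C: "(s + \<Delta> \<epsilon>, x0 s + d s, \<epsilon>) \<in> Cg" using s' D e1 eps by (auto simp: Cg_def)
          have "dist (s + \<Delta> \<epsilon>, x0 s + d s, \<epsilon>) (s, x0 s, 0) = norm (\<Delta> \<epsilon>, d s, \<epsilon>)"
            by (simp add: dist_norm)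
          also have "\<dots> \<le> norm (\<Delta> \<epsilon>) + norm (d s, \<epsilon>)" by (rule norm_Pair_le)
          also have "norm (d s, \<epsilon>) \<le> norm (d s) + norm \<epsilon>" by (rule norm_Pair_le)
          finally have "dist (s + \<Delta> \<epsilon>, x0 s + d s, \<epsilon>) (s, x0 s, 0) < dg"
            using dn D e1 eps by (simp add: algebra_simps)
          from dg(2)[OF pC p'C this] show ?thesis
            by (simp add: err2_def g0_def xe_eq dist_norm)
        qed
        have "norm (w' s - \<epsilon> * (z s \<bullet> g0 s)) \<le> \<bar>z s \<bullet> err1\<bar> + \<epsilon> * \<bar>z s \<bullet> err2\<bar>"
          unfolding eq using eps abs_triangle_ineq[of "z s \<bullet> err1" "\<epsilon> * (z s \<bullet> err2)"] by (simp add: abs_mult)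
        also have "\<dots> \<le> Bz * (\<eta> * \<epsilon>) + \<epsilon> * (Bz * \<eta>)"
        proof (intro add_mono mult_left_mono)
          show "\<bar>z s \<bullet> err1\<bar> \<le> Bz * (\<eta> * \<epsilon>)"
            using Cauchy_Schwarz_ineq2[of "z s" err1] Bz(2)[OF s'] n1
            by (meson mult_mono norm_ge_zero order_trans)
          show "\<bar>z s \<bullet> err2\<bar> \<le> Bz * \<eta>"
            using Cauchy_Schwarz_ineq2[of "z s" err2] Bz(2)[OF s'] n2
            by (meson mult_mono norm_ge_zero order_trans)
        qed (use eps in auto)
        also have "\<dots> = 2 * Bz * \<eta> * \<epsilon>" by simp
        finally show ?thesis .
      qed
      have "norm (w t - w (t-T) - \<epsilon> * I) \<le> 2 * Bz * \<eta> * \<epsilon> * Henstock_Kurzweil_Integration.content (cbox (t-T) t)"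
        using rint rbnd Bz \<eta> eps by (intro has_integral_bound) auto
      then have bnd: "\<bar>w t - w (t-T) - \<epsilon> * I\<bar> \<le> 2 * Bz * \<eta> * \<epsilon> * T"
        using T_pos by (simp add: content_real)
      have "w t - \<epsilon> * K t = (\<rho> / (\<rho> - 1)) * (w t - w (t-T) - \<epsilon> * I)"
      proof -
        have "w (t - T) = w t / \<rho>" using wrel rho0 by simp
        then show ?thesis using rho0 rho1 by (simp add: K_def I_def field_simps)
      qed
      then have "\<bar>w t - \<epsilon> * K t\<bar> = q * \<bar>w t - w (t-T) - \<epsilon> * I\<bar>" by (simp add: q_def abs_mult)
      also have "\<dots> \<le> q * (2 * Bz * \<eta> * \<epsilon> * T)" using q bnd by (intro mult_left_mono) auto
      also have "\<dots> = e * \<epsilon>" using q Bz T_pos by (simp add: \<eta>_def field_simps)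
      finally show "\<bar>z t \<bullet> (xe \<epsilon> (t + \<Delta> \<epsilon>) - x0 t) - \<epsilon> * K t\<bar> \<le> e * \<epsilon>"
        by (simp add: w_def d_def)
    qed
  qed
  show ?thesis
  proof (intro ballI conjI impI)
    fix t assume t: "t \<in> {0..T}"
    have pos: "\<forall>\<^sub>F \<epsilon> in at_right 0. \<epsilon> > (0::real)"
      using eventually_at_right_real[of 0 1] by (rule eventually_mono) auto
    {
      assume Kp: "\<rho> / (\<rho> - 1) * integral {t - T..t} (\<lambda>s. z s \<bullet> g s (x0 s) 0) > 0"
      then have Kp': "K t > 0" by (simp add: K_def)
      have "K t / 2 > 0" using Kp' by simp
      note ev = eventually_conj[OF key[OF t this] pos]
      show "\<forall>\<^sub>F \<epsilon> in at_right 0. cos_angle (z t) (xe \<epsilon> (t + \<Delta> \<epsilon>) - x0 t) > 0"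
        using ev
      proof (rule eventually_mono)
        fix \<epsilon> :: real
        assume h: "\<bar>z t \<bullet> (xe \<epsilon> (t + \<Delta> \<epsilon>) - x0 t) - \<epsilon> * K t\<bar> \<le> K t / 2 * \<epsilon> \<and> 0 < \<epsilon>"
        have "\<epsilon> * K t > 0" using h Kp' by (simp add: mult_pos_pos)
        moreover have "\<And>w P c. \<bar>w - P\<bar> \<le> c \<Longrightarrow> c = P/2 \<Longrightarrow> P > 0 \<Longrightarrow> w > (0::real)" by arith
        ultimately have w: "z t \<bullet> (xe \<epsilon> (t + \<Delta> \<epsilon>) - x0 t) > 0" using h by (metis times_divide_eq_left mult.commute)
        then have "z t \<noteq> 0" "xe \<epsilon> (t + \<Delta> \<epsilon>) - x0 t \<noteq> 0" by auto
        then show "cos_angle (z t) (xe \<epsilon> (t + \<Delta> \<epsilon>) - x0 t) > 0"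
          unfolding cos_angle_def using w by simp
      qed
    }
    {
      assume Kp: "\<rho> / (\<rho> - 1) * integral {t - T..t} (\<lambda>s. z s \<bullet> g s (x0 s) 0) < 0"
      then have Kp': "K t < 0" by (simp add: K_def)
      have "- K t / 2 > 0" using Kp' by simp
      note ev = eventually_conj[OF key[OF t this] pos]
      show "\<forall>\<^sub>F \<epsilon> in at_right 0. cos_angle (z t) (xe \<epsilon> (t + \<Delta> \<epsilon>) - x0 t) < 0"
        using ev
      proof (rule eventually_mono)
        fix \<epsilon> :: real
        assume h: "\<bar>z t \<bullet> (xe \<epsilon> (t + \<Delta> \<epsilon>) - x0 t) - \<epsilon> * K t\<bar> \<le> - K t / 2 * \<epsilon> \<and> 0 < \<epsilon>"
        have "\<epsilon> * K t < 0" using h Kp' by (simp add: mult_pos_neg)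
        moreover have "\<And>w P c. \<bar>w - P\<bar> \<le> c \<Longrightarrow> c = -P/2 \<Longrightarrow> P < 0 \<Longrightarrow> w < (0::real)" by arith
        ultimately have w: "z t \<bullet> (xe \<epsilon> (t + \<Delta> \<epsilon>) - x0 t) < 0" using h by (metis times_divide_eq_left mult.commute minus_mult_left)
        then have "z t \<noteq> 0" "xe \<epsilon> (t + \<Delta> \<epsilon>) - x0 t \<noteq> 0" by auto
        then show "cos_angle (z t) (xe \<epsilon> (t + \<Delta> \<epsilon>) - x0 t) < 0"
          unfolding cos_angle_def using w by (simp add: divide_neg_pos)
      qed
    }
  qed
qed

end
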